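(* For every regular social purpose game $\Gamma$ and every level of cooperation $k\in\{2,\dots,n\}$, there exists at least one partial cooperative leadership equilibrium of $\Gamma$ at level $k$.
   Context: A social purpose game $\Gamma=\langle N,\overline{Q},H,(\alpha_i,h_i,g_i)_{i\in N}\rangle$ consists of a player set $N=\{1,\dots,n\}$ with $n\ge 2$, a number $\overline{Q}>0$ such that every player's strategy set is $S_i=[0,\overline{Q}]$, a function $H\colon\mathbb{R}\to\mathbb{R}$, and for each $i\in N$ a weight $\alpha_i>0$ and functions $h_i,g_i\colon[0,\overline{Q}]\to\mathbb{R}$, with players ordered so that $0<\alpha_1\le\dots\le\alpha_n$. The payoff of player $i$ at $x\in[0,\overline{Q}]^N$ is $\pi_i(x)=\alpha_i H\big(\sum_{j=1}^n h_j(x_j)\big)-g_i(x_i)$. $\Gamma$ is regular if: each $h_i$ is the identity; $H$ is continuously differentiable, increasing and concave; and each $g_i$ is continuously differentiable, increasing and convex. For a level of cooperation $k\in\{2,\dots,n\}$, let $C_k=\{n-k+1,\dots,n\}$ (cooperators) and $N_k=N\setminus C_k=\{1,\dots,n-k\}$ (non-cooperators); write profiles as $(x^{N_k},x^{C_k})$ with $x^{N_k}\in[0,\overline{Q}]^{N_k}$, $x^{C_k}\in[0,\overline{Q}]^{C_k}$. For fixed $x^{C_k}$, $\mathrm{NE}(x^{C_k})\subseteq[0,\overline{Q}]^{N_k}$ is the set of Nash equilibria of the game with player set $N_k$, strategy sets $[0,\overline{Q}]$ and payoffs $x^{N_k}\mapsto\pi_j(x^{N_k},x^{C_k})$, $j\in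 N_k$ (when $N_k=\emptyset$ this set consists of the empty profile). Define $\tilde\pi(x^{C_k})=\min_{x^{N_k}\in\mathrm{NE}(x^{C_k})}\sum_{i\in C_k}\pi_i(x^{N_k},x^{C_k})$. A partial cooperative leadership equilibrium (PCLE) at level $k$ is a profile $(x^{N_k}_*,x^{C_k}_* )$ such that $x^{C_k}_*$ maximizes $\tilde\pi$ over $[0,\overline{Q}]^{C_k}$ and $x^{N_k}_*\in\arg\min_{x^{N_k}\in\mathrm{NE}(x^{C_k}_* )}\sum_{i\in C_k}\pi_i(x^{N_k},x^{C_k}_* )$. *)

theory Defs
  imports "HOL-Analysis.Analysis"
begin

text \<open>A social purpose game is given by n, Qbar, H, alpha, h, g. Players are 1..n;
  profiles are functions nat => real whose values on 1..n lie in [0,Qbar]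
  (values outside 1..n are irrelevant).\<close>

definition spg_payoff ::
  "nat \<Rightarrow> (real \<Rightarrow> real) \<Rightarrow> (nat \<Rightarrow> real) \<Rightarrow> (nat \<Rightarrow> real \<Rightarrow> real) \<Rightarrow> (nat \<Rightarrow> real \<Rightarrow> real)
    \<Rightarrow> nat \<Rightarrow> (nat \<Rightarrow> real) \<Rightarrow> real" where
  "spg_payoff n H \<alpha> h g i x = \<alpha> i * H (\<Sum>j\<in>{1..n}. h j (x j)) - g i (x i)"

definition social_purpose_game :: "nat \<Rightarrow> real \<Rightarrow> (nat \<Rightarrow> real) \<Rightarrow> bool" where
  "social_purpose_game n Q \<alpha> \<longleftrightarrow> n \<ge> 2 \<and> Q > 0 \<and> (\<forall>i\<in>{1..n}. \<alpha> i > 0)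
     \<and> (\<forall>i j. 1 \<le> i \<and> i \<le> j \<and> j \<le> n \<longrightarrow> \<alpha> i \<le> \<alpha> j)"

definition continuously_differentiable_on_interval :: "real \<Rightarrow> real \<Rightarrow> (real \<Rightarrow> real) \<Rightarrow> bool" where
  "continuously_differentiable_on_interval a b f \<longleftrightarrow>
     (\<exists>f'. continuous_on {a..b} f' \<and> (\<forall>t\<in>{a..b}. (f has_real_derivative f' t) (at t within {a..b})))"

definition regular_spg ::
  "nat \<Rightarrow> real \<Rightarrow> (real \<Rightarrow> real) \<Rightarrow> (nat \<Rightarrow> real) \<Rightarrow> (nat \<Rightarrow> real \<Rightarrow> real) \<Rightarrow> (nat \<Rightarrow> real \<Rightarrow> real) \<Rightarrow> bool" where
  "regular_spg n Q H \<alpha> h g \<longleftrightarrow>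
     social_purpose_game n Q \<alpha>
     \<and> (\<forall>i\<in>{1..n}. \<forall>t\<in>{0..Q}. h i t = t)
     \<and> (\<exists>H'. continuous_on UNIV H' \<and> (\<forall>t. (H has_real_derivative H' t) (at t)))
     \<and> mono H \<and> concave_on UNIV H
     \<and> (\<forall>i\<in>{1..n}. continuously_differentiable_on_interval 0 Q (g i)
                     \<and> mono_on {0..Q} (g i) \<and> convex_on {0..Q} (g i))"

definition spg_profiles :: "nat \<Rightarrow> real \<Rightarrow> (nat \<Rightarrow> real) set" where
  "spg_profiles n Q = {x. \<forall>i\<in>{1..n}. x i \<in> {0..Q}}"

definition cooperators :: "nat \<Rightarrow> nat \<Rightarrow> nat set" where
  "cooperators n k = {n - k + 1..n}"

definition noncooperators :: "nat \<Rightarrow> nat \<Rightarrow> nat set" where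
  "noncooperators n k = {1..n - k}"

definition noncoop_NE ::
  "nat \<Rightarrow> real \<Rightarrow> (real \<Rightarrow> real) \<Rightarrow> (nat \<Rightarrow> real) \<Rightarrow> (nat \<Rightarrow> real \<Rightarrow> real) \<Rightarrow> (nat \<Rightarrow> real \<Rightarrow> real)
    \<Rightarrow> nat \<Rightarrow> (nat \<Rightarrow> real) \<Rightarrow> bool" where
  "noncoop_NE n Q H \<alpha> h g k x \<longleftrightarrow> x \<in> spg_profiles n Q \<and>
     (\<forall>j\<in>noncooperators n k. \<forall>t\<in>{0..Q}.
        spg_payoff n H \<alpha> h g j (x(j := t)) \<le> spg_payoff n H \<alpha> h g j x)"

definition coop_sum ::
  "nat \<Rightarrow> (real \<Rightarrow> real) \<Rightarrow> (nat \<Rightarrow> real) \<Rightarrow> (nat \<Rightarrow> real \<Rightarrow> real) \<Rightarrow> (nat \<Rightarrow> real \<Rightarrow> real)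
    \<Rightarrow> nat \<Rightarrow> (nat \<Rightarrow> real) \<Rightarrow> real" where
  "coop_sum n H \<alpha> h g k x = (\<Sum>i\<in>cooperators n k. spg_payoff n H \<alpha> h g i x)"

definition NE_given ::
  "nat \<Rightarrow> real \<Rightarrow> (real \<Rightarrow> real) \<Rightarrow> (nat \<Rightarrow> real) \<Rightarrow> (nat \<Rightarrow> real \<Rightarrow> real) \<Rightarrow> (nat \<Rightarrow> real \<Rightarrow> real)
    \<Rightarrow> nat \<Rightarrow> (nat \<Rightarrow> real) \<Rightarrow> (nat \<Rightarrow> real) set" where
  "NE_given n Q H \<alpha> h g k x =
     {z. noncoop_NE n Q H \<alpha> h g k z \<and> (\<forall>i\<in>cooperators n k. z i = x i)}"

definition tilde_pi ::
  "nat \<Rightarrow> real \<Rightarrow> (real \<Rightarrow> real) \<Rightarrow> (nat \<Rightarrow> real) \<Rightarrow> (nat \<Rightarrow> real \<Rightarrow> real) \<Rightarrow> (nat \<Rightarrow> real \<Rightarrow> real)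
    \<Rightarrow> nat \<Rightarrow> (nat \<Rightarrow> real) \<Rightarrow> real" where
  "tilde_pi n Q H \<alpha> h g k x = Inf (coop_sum n H \<alpha> h g k ` NE_given n Q H \<alpha> h g k x)"

definition is_PCLE ::
  "nat \<Rightarrow> real \<Rightarrow> (real \<Rightarrow> real) \<Rightarrow> (nat \<Rightarrow> real) \<Rightarrow> (nat \<Rightarrow> real \<Rightarrow> real) \<Rightarrow> (nat \<Rightarrow> real \<Rightarrow> real)
    \<Rightarrow> nat \<Rightarrow> (nat \<Rightarrow> real) \<Rightarrow> bool" where
  "is_PCLE n Q H \<alpha> h g k x \<longleftrightarrow>
     x \<in> spg_profiles n Q
     \<and> (\<forall>y\<in>spg_profiles n Q. tilde_pi n Q H \<alpha> h g k y \<le> tilde_pi n Q H \<alpha> h g k x)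
     \<and> x \<in> NE_given n Q H \<alpha> h g k x
     \<and> (\<forall>z\<in>NE_given n Q H \<alpha> h g k x. coop_sum n H \<alpha> h g k x \<le> coop_sum n H \<alpha> h g k z)"

end

theory Submission imports Defs begin

lemma convex_tangent_Icc:
  fixes f :: "real \<Rightarrow> real"
  assumes conv: "convex_on {a..b} f" and c: "c \<in> {a..b}" and x: "x \<in> {a..b}"
    and deriv: "(f has_real_derivative f') (at c within {a..b})"
  shows "f x - f c \<ge> f' * (x - c)"
proof (cases x c rule: linorder_cases)
  assume xc: "x > c"
  let ?A' = "{c<..<x}"
  have "at c within ?A' \<noteq> bot" using xc by (subst at_within_eq_bot_iff) auto
  moreover from deriv have "((\<lambda>y. (f y - f c) / (y - c)) \<longlongrightarrow> f') (at c within ?A')"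
    unfolding has_field_derivative_iff using c x
    by (elim tendsto_mono[rotated]) (intro at_le, auto)
  moreover have "eventually (\<lambda>y. (f y - f c) / (y - c) \<le> (f x - f c) / (x - c)) (at c within ?A')"
    unfolding eventually_at_filter
  proof (rule always_eventually, intro allI impI)
    fix y assume y: "y \<in> {c<..<x}"
    with conv x c have "f y \<le> (f x - f c) / (x - c) * (y - c) + f c"
      by (intro convex_onD_Icc' convex_on_subset[OF conv]) auto
    hence "f y - f c \<le> (f x - f c) / (x - c) * (y - c)" by simp
    thus "(f y - f c) / (y - c) \<le> (f x - f c) / (x - c)" using y xc by (simp add: field_split_simps)
  qed
  ultimately have "f' \<le> (f x - f c) / (x - c)" by (simp add: tendsto_upperbound)
  thus ?thesis using xc by (simp add: field_simps)
next
  assume xc: "x < c"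
  let ?A' = "{x<..<c}"
  have "at c within ?A' \<noteq> bot" using xc by (subst at_within_eq_bot_iff) auto
  moreover from deriv have "((\<lambda>y. (f y - f c) / (y - c)) \<longlongrightarrow> f') (at c within ?A')"
    unfolding has_field_derivative_iff using c x
    by (elim tendsto_mono[rotated]) (intro at_le, auto)
  moreover have "eventually (\<lambda>y. (f y - f c) / (y - c) \<ge> (f x - f c) / (x - c)) (at c within ?A')"
    unfolding eventually_at_filter
  proof (rule always_eventually, intro allI impI)
    fix y assume y: "y \<in> {x<..<c}"
    with conv x c have "f y \<le> (f x - f c) / (c - x) * (c - y) + f c"
      by (intro convex_onD_Icc'' convex_on_subset[OF conv]) auto
    hence "f y - f c \<le> (f x - f c) * ((c - y) / (c - x))" by simp
    also have "(c - y) / (c - x) = (y - c) / (x - c)" using y xc by (simp add: field_simps)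
    finally show "(f y - f c) / (y - c) \<ge> (f x - f c) / (x - c)" using y xc
      by (simp add: field_split_simps)
  qed
  ultimately have "f' \<ge> (f x - f c) / (x - c)" by (simp add: tendsto_lowerbound)
  thus ?thesis using xc by (simp add: field_simps)
qed simp

lemma concave_tangent:
  fixes H :: "real \<Rightarrow> real"
  assumes conc: "concave_on UNIV H" and der: "(H has_real_derivative d) (at s)"
  shows "H t \<le> H s + d * (t - s)"
proof -
  have "convex_on UNIV (\<lambda>x. - H x)" using conc by (simp add: concave_on_def)
  moreover have "((\<lambda>x. - H x) has_real_derivative - d) (at s within UNIV)"
    using der by (auto intro: derivative_eq_intros)
  ultimately have "(- H t) - (- H s) \<ge> (- d) * (t - s)"
    by (intro convex_on_imp_above_tangent) auto
  thus ?thesis by (simp add: algebra_simps)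
qed


locale reg =
  fixes n :: nat and Q :: real and H :: "real \<Rightarrow> real" and \<alpha> :: "nat \<Rightarrow> real"
    and g :: "nat \<Rightarrow> real \<Rightarrow> real" and m :: nat and H' :: "real \<Rightarrow> real"
    and g' :: "nat \<Rightarrow> real \<Rightarrow> real"
  assumes Qpos: "Q > 0" and mn: "m \<le> n"
  and alpha: "\<And>i. i \<in> {1..n} \<Longrightarrow> \<alpha> i > 0"
  and H'cont: "continuous_on UNIV H'"
  and Hder: "\<And>t. (H has_real_derivative H' t) (at t)"
  and Hmono: "mono H" and Hconc: "concave_on UNIV H"
  and g'cont: "\<And>i. i \<in> {1..n} \<Longrightarrow> continuous_on {0..Q} (g' i)"
  and gder: "\<And>i t. i \<in> {1..n} \<Longrightarrow> t \<in> {0..Q} \<Longrightarrow> (g i has_real_derivative g' i t) (at t within {0..Q})"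
  and gconv: "\<And>i. i \<in> {1..n} \<Longrightarrow> convex_on {0..Q} (g i)"
begin

definition R where "R j p = {x \<in> {0..Q}. x = Q \<or> \<alpha> j * p \<le> g' j x}"
definition L where "L j p = {x \<in> {0..Q}. x = 0 \<or> g' j x \<le> \<alpha> j * p}"
definition bt where "bt j p = Inf (R j p)"
definition up where "up j p = Sup (L j p)"

lemma g_tangent:
  assumes "j \<in> {1..n}" "x \<in> {0..Q}" "y \<in> {0..Q}"
  shows "g j x - g j y \<ge> g' j y * (x - y)"
  using convex_tangent_Icc[OF gconv[OF assms(1)] assms(3) assms(2) gder[OF assms(1) assms(3)]] .

lemma g'_mono:
  assumes "j \<in> {1..n}" "x \<in> {0..Q}" "y \<in> {0..Q}" "x \<le> y"
  shows "g' j x \<le> g' j y"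
proof (cases "x = y")
  case False
  have 1: "g j y - g j x \<ge> g' j x * (y - x)" by (rule g_tangent) (use assms in auto)
  have 2: "g j x - g j y \<ge> g' j y * (x - y)" by (rule g_tangent) (use assms in auto)
  from 1 2 have "(g' j y - g' j x) * (y - x) \<ge> 0" by (simp add: algebra_simps)
  with False assms(4) show ?thesis by (simp add: zero_le_mult_iff)
qed simp

lemma H'_antimono:
  assumes "s \<le> t" shows "H' t \<le> H' s"
proof (cases "s = t")
  case False
  have 1: "H t \<le> H s + H' s * (t - s)" by (rule concave_tangent[OF Hconc Hder])
  have 2: "H s \<le> H t + H' t * (s - t)" by (rule concave_tangent[OF Hconc Hder])
  from 1 2 have "(H' s - H' t) * (t - s) \<ge> 0" by (simp add: algebra_simps)
  with False assms show ?thesis by (simp add: zero_le_mult_iff)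
qed simp

lemma R_closed: assumes "j \<in> {1..n}" shows "closed (R j p)"
proof -
  have "R j p = {Q} \<union> {x \<in> {0..Q}. (\<lambda>_. \<alpha> j * p) x \<le> g' j x}"
    using Qpos by (auto simp: R_def)
  moreover have "closed {x \<in> {0..Q}. (\<lambda>_. \<alpha> j * p) x \<le> g' j x}"
    by (rule continuous_on_closed_Collect_le) (auto intro: g'cont[OF assms] continuous_on_const)
  ultimately show ?thesis by auto
qed

lemma L_closed: assumes "j \<in> {1..n}" shows "closed (L j p)"
proof -
  have "L j p = {0} \<union> {x \<in> {0..Q}. g' j x \<le> (\<lambda>_. \<alpha> j * p) x}"
    using Qpos by (auto simp: L_def)
  moreover have "closed {x \<in> {0..Q}. g' j x \<le> (\<lambda>_. \<alpha> j * p) x}"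
    by (rule continuous_on_closed_Collect_le) (auto intro: g'cont[OF assms] continuous_on_const)
  ultimately show ?thesis by auto
qed

lemma bt_in: assumes "j \<in> {1..n}" shows "bt j p \<in> R j p"
  unfolding bt_def
  by (rule closed_contains_Inf) (use Qpos R_closed[OF assms] in \<open>auto simp: R_def bdd_below_def\<close>)

lemma up_in: assumes "j \<in> {1..n}" shows "up j p \<in> L j p"
  unfolding up_def
proof (rule closed_contains_Sup)
  have "0 \<in> L j p" using Qpos by (auto simp: L_def)
  then show "L j p \<noteq> {}" by auto
  show "bdd_above (L j p)" by (rule bdd_aboveI[of _ Q]) (auto simp: L_def)
qed (rule L_closed[OF assms])

lemma bt_range: assumes "j \<in> {1..n}" shows "0 \<le> bt j p" "bt j p \<le> Q"
  using bt_in[OF assms, of p] by (auto simp: R_def)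

lemma up_range: assumes "j \<in> {1..n}" shows "0 \<le> up j p" "up j p \<le> Q"
  using up_in[OF assms, of p] by (auto simp: L_def)

lemma bt_le_iff:
  assumes "j \<in> {1..n}" "x \<in> {0..Q}"
  shows "bt j p \<le> x \<longleftrightarrow> x \<in> R j p"
proof
  assume le: "bt j p \<le> x"
  have b: "bt j p \<in> R j p" by (rule bt_in[OF assms(1)])
  show "x \<in> R j p"
  proof (cases "x = Q")
    case False
    then have "bt j p \<noteq> Q" using le assms by auto
    then have "\<alpha> j * p \<le> g' j (bt j p)" using b by (auto simp: R_def)
    also have "\<dots> \<le> g' j x" using g'_mono[OF assms(1) _ assms(2) le] b by (auto simp: R_def)
    finally show ?thesis using assms by (auto simp: R_def)
  qed (use assms in \<open>auto simp: R_def\<close>)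
next
  assume "x \<in> R j p"
  then show "bt j p \<le> x" unfolding bt_def
    by (intro cInf_lower) (auto simp: R_def bdd_below_def)
qed

lemma le_up_iff:
  assumes "j \<in> {1..n}" "x \<in> {0..Q}"
  shows "x \<le> up j p \<longleftrightarrow> x \<in> L j p"
proof
  assume le: "x \<le> up j p"
  have b: "up j p \<in> L j p" by (rule up_in[OF assms(1)])
  show "x \<in> L j p"
  proof (cases "x = 0")
    case False
    then have "up j p \<noteq> 0" using le assms by auto
    then have "g' j (up j p) \<le> \<alpha> j * p" using b by (auto simp: L_def)
    moreover have "g' j x \<le> g' j (up j p)" using g'_mono[OF assms(1) assms(2) _ le] b by (auto simp: L_def)
    ultimately show ?thesis using assms by (auto simp: L_def)
  qed (use assms in \<open>auto simp: L_def\<close>)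
next
  assume "x \<in> L j p"
  then show "x \<le> up j p" unfolding up_def
    by (intro cSup_upper) (auto simp: L_def bdd_above_def)
qed

lemma bt_mono:
  assumes "j \<in> {1..n}" "p \<le> p'" shows "bt j p \<le> bt j p'"
proof -
  have "bt j p' \<in> R j p'" by (rule bt_in[OF assms(1)])
  then have "bt j p' \<in> R j p"
    using alpha[OF assms(1)] assms(2) by (auto simp: R_def intro: order_trans[OF mult_left_mono])
  then show ?thesis using bt_le_iff[OF assms(1)] bt_range[OF assms(1)] by auto
qed

lemma bt_le_up:
  assumes j: "j \<in> {1..n}" shows "bt j p \<le> up j p"
proof (rule ccontr)
  assume "\<not> ?thesis"
  then have lt: "up j p < bt j p" by simp
  let ?b = "bt j p"
  have bR: "?b \<in> R j p" by (rule bt_in[OF j])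
  have b0: "0 < ?b" using lt up_range[OF j, of p] by linarith
  have bQ: "?b \<in> {0..Q}" using bt_range[OF j] by auto
  have "?b \<notin> L j p" using le_up_iff[OF j bQ, of p] lt by simp
  then have gt: "g' j ?b > \<alpha> j * p" using bQ b0 by (auto simp: L_def)
  from g'cont[OF j] bQ have "continuous (at ?b within {0..Q}) (g' j)"
    by (simp add: continuous_on_eq_continuous_within)
  then have "eventually (\<lambda>y. g' j y > \<alpha> j * p) (at ?b within {0..Q})"
    using gt unfolding continuous_within by (rule order_tendstoD)
  then obtain d where d: "d > 0" "\<And>y. y \<in> {0..Q} \<Longrightarrow> y \<noteq> ?b \<Longrightarrow> dist y ?b < d \<Longrightarrow> g' j y > \<alpha> j * p"
    unfolding eventually_at by auto
  define y where "y = max 0 (?b - d/2)"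
  have y: "y \<in> {0..Q}" "y < ?b" "dist y ?b < d" using d b0 bQ by (auto simp: y_def dist_real_def)
  then have "g' j y > \<alpha> j * p" using d by auto
  then have "y \<in> R j p" using y by (auto simp: R_def)
  then have "?b \<le> y" using bt_le_iff[OF j y(1)] by simp
  with y show False by simp
qed


lemma foc_suff:
  assumes j: "j \<in> {1..n}" and y: "y \<in> {0..Q}" "y \<in> R j (H' S)" "y \<in> L j (H' S)"
    and t: "t \<in> {0..Q}"
  shows "\<alpha> j * H (S - y + t) - g j t \<le> \<alpha> j * H S - g j y"
proof -
  have 1: "H (S - y + t) \<le> H S + H' S * ((S - y + t) - S)" by (rule concave_tangent[OF Hconc Hder])
  have 2: "g j t - g j y \<ge> g' j y * (t - y)" by (rule g_tangent[OF j t y(1)])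
  have 3: "(\<alpha> j * H' S - g' j y) * (t - y) \<le> 0"
  proof (cases "t \<le> y")
    case True
    show ?thesis
    proof (cases "t = y")
      case False
      then have "y \<noteq> 0" using True t by auto
      then have "g' j y \<le> \<alpha> j * H' S" using y(3) by (auto simp: L_def)
      then show ?thesis using True by (simp add: mult_nonneg_nonpos)
    qed simp
  next
    case False
    then have "y \<noteq> Q" using t by auto
    then have "\<alpha> j * H' S \<le> g' j y" using y(2) by (auto simp: R_def)
    then show ?thesis using False by (simp add: mult_nonpos_nonneg)
  qed
  have a: "\<alpha> j > 0" by (rule alpha[OF j])
  from 1 a have "\<alpha> j * H (S - y + t) \<le> \<alpha> j * H S + \<alpha> j * H' S * (t - y)"
    by (auto dest: mult_left_mono[of _ _ "\<alpha> j"] simp: algebra_simps)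
  with 2 3 show ?thesis by (simp add: algebra_simps)
qed

lemma foc_nec:
  assumes j: "j \<in> {1..n}" and y: "y \<in> {0..Q}"
    and ne: "\<forall>t\<in>{0..Q}. \<alpha> j * H (S - y + t) - g j t \<le> \<alpha> j * H S - g j y"
  shows "y \<in> R j (H' S)"
proof (rule ccontr)
  assume "y \<notin> R j (H' S)"
  then have yQ: "y \<noteq> Q" and gt: "\<alpha> j * H' S > g' j y" using y by (auto simp: R_def)
  have hS: "(H has_real_derivative H' S) (at (S - y + y))" using Hder by simp
  have "((\<lambda>t. S - y + t) has_real_derivative 1) (at y within {0..Q})"
    by (auto intro!: derivative_eq_intros)
  from DERIV_chain2[OF hS this]
  have "((\<lambda>t. H (S - y + t)) has_real_derivative H' S) (at y within {0..Q})" by simp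
  from DERIV_diff[OF DERIV_cmult[OF this, of "\<alpha> j"] gder[OF j y]]
  have "((\<lambda>t. \<alpha> j * H (S - y + t) - g j t) has_real_derivative \<alpha> j * H' S - g' j y) (at y within {0..Q})" .
  from has_real_derivative_pos_inc_right[OF this] gt
  obtain d where d: "d > 0" "\<And>h. h > 0 \<Longrightarrow> y + h \<in> {0..Q} \<Longrightarrow> h < d \<Longrightarrow>
     \<alpha> j * H (S - y + y) - g j y < \<alpha> j * H (S - y + (y + h)) - g j (y + h)" by auto
  define h where "h = min (d/2) (Q - y)"
  have h: "h > 0" "y + h \<in> {0..Q}" "h < d" using d y yQ by (auto simp: h_def)
  from d(2)[OF h] ne[rule_format, OF h(2)] show False by simp
qed

definition Up where "Up T = {S. T + (\<Sum>j\<in>{1..m}. bt j (H' S)) \<le> S \<and> S \<le> T + m * Q}"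
definition phi where "phi T = Inf (Up T)"

lemma sum_bt_range: "0 \<le> (\<Sum>j\<in>{1..m}. bt j p)" "(\<Sum>j\<in>{1..m}. bt j p) \<le> m * Q"
proof -
  show "0 \<le> (\<Sum>j\<in>{1..m}. bt j p)" by (rule sum_nonneg) (use bt_range mn in auto)
  have "(\<Sum>j\<in>{1..m}. bt j p) \<le> (\<Sum>j\<in>{1..m}. Q)" by (rule sum_mono) (use bt_range mn in auto)
  then show "(\<Sum>j\<in>{1..m}. bt j p) \<le> m * Q" by simp
qed

lemma Up_top: "T + m * Q \<in> Up T"
  using sum_bt_range[of "H' (T + m * Q)"] by (auto simp: Up_def)

lemma Up_ge: "S \<in> Up T \<Longrightarrow> T \<le> S"
  using sum_bt_range[of "H' S"] by (auto simp: Up_def)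

lemma Up_bdd: "bdd_below (Up T)"
  using Up_ge by (auto simp: bdd_below_def)

lemma phi_le: "S \<in> Up T \<Longrightarrow> phi T \<le> S"
  unfolding phi_def by (rule cInf_lower[OF _ Up_bdd])

lemma phi_ge: "T \<le> phi T"
  unfolding phi_def using Up_top by (intro cInf_greatest) (auto simp: Up_ge)

lemma H'_isCont: "isCont H' x"
  using H'cont by (simp add: continuous_on_eq_continuous_at)

lemma phi_in: "phi T \<in> Up T"
proof (rule ccontr)
  assume notin: "phi T \<notin> Up T"
  let ?S = "phi T"
  have le: "?S \<le> T + m * Q" using phi_le[OF Up_top] .
  then have viol: "\<not> T + (\<Sum>j\<in>{1..m}. bt j (H' ?S)) \<le> ?S" using notin by (auto simp: Up_def)
  define \<gamma> where "\<gamma> = T + (\<Sum>j\<in>{1..m}. bt j (H' ?S)) - ?S"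
  have \<gamma>: "\<gamma> > 0" using viol by (simp add: \<gamma>_def)
  define \<epsilon> where "\<epsilon> = \<gamma> / (2 * (m + 1))"
  have \<epsilon>: "\<epsilon> > 0" "m * \<epsilon> < \<gamma> / 2" using \<gamma> by (auto simp: \<epsilon>_def field_simps)
  have ev: "\<forall>j\<in>{1..m}. eventually (\<lambda>S. bt j (H' ?S) - \<epsilon> \<le> bt j (H' S)) (at ?S)"
  proof
    fix j assume "j \<in> {1..m}"
    then have j: "j \<in> {1..n}" using mn by auto
    show "eventually (\<lambda>S. bt j (H' ?S) - \<epsilon> \<le> bt j (H' S)) (at ?S)"
    proof (cases "bt j (H' ?S) - \<epsilon> < 0")
      case True
      show ?thesis
      proof (intro always_eventually allI)
        fix S show "bt j (H' ?S) - \<epsilon> \<le> bt j (H' S)" using bt_range(1)[OF j, of "H' S"] True by linarith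
      qed
    next
      case False
      define x where "x = bt j (H' ?S) - \<epsilon>"
      have x: "x \<in> {0..Q}" "x < bt j (H' ?S)" using False \<epsilon> bt_range[OF j, of "H' ?S"] by (auto simp: x_def)
      then have "x \<notin> R j (H' ?S)" using bt_le_iff[OF j x(1), of "H' ?S"] by auto
      then have "\<alpha> j * H' ?S > g' j x" using x by (auto simp: R_def)
      then have "H' ?S > g' j x / \<alpha> j" using alpha[OF j] by (simp add: field_simps)
      then have "eventually (\<lambda>S. H' S > g' j x / \<alpha> j) (at ?S)"
        by (rule order_tendstoD(1)[OF H'_isCont[of ?S, unfolded isCont_def]])
      then show ?thesis
      proof eventually_elim
        case (elim S)
        then have "\<alpha> j * H' S > g' j x" using alpha[OF j] by (simp add: field_simps)
        then have "x \<notin> R j (H' S)" using x bt_range(2)[OF j, of "H' ?S"] by (auto simp: R_def)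
        then have "\<not> bt j (H' S) \<le> x" using bt_le_iff[OF j x(1)] by auto
        then show ?case by (simp add: x_def)
      qed
    qed
  qed
  have ev1: "eventually (\<lambda>S. \<forall>j\<in>{1..m}. bt j (H' ?S) - \<epsilon> \<le> bt j (H' S)) (at ?S)"
    using ev by (intro eventually_ball_finite) auto
  have ev2: "eventually (\<lambda>S. S < ?S + \<gamma> / 2) (at ?S)"
    using \<gamma> by (intro order_tendstoD(2)[OF tendsto_ident_at]) auto
  from eventually_conj[OF ev1 ev2] obtain d where d: "d > 0"
    "\<And>S. S \<noteq> ?S \<Longrightarrow> dist S ?S < d \<Longrightarrow> (\<forall>j\<in>{1..m}. bt j (H' ?S) - \<epsilon> \<le> bt j (H' S)) \<and> S < ?S + \<gamma> / 2"
    unfolding eventually_at by auto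
  have "?S < ?S + d" using d by simp
  then obtain S where S: "S \<in> Up T" "S < ?S + d"
    using cInf_lessD[of "Up T"] Up_top unfolding phi_def by blast
  have "?S \<le> S" using phi_le[OF S(1)] .
  then have "S \<noteq> ?S" using S(1) notin by auto
  moreover have "dist S ?S < d" using S(2) \<open>?S \<le> S\<close> by (simp add: dist_real_def)
  ultimately have P: "\<forall>j\<in>{1..m}. bt j (H' ?S) - \<epsilon> \<le> bt j (H' S)" "S < ?S + \<gamma> / 2" using d by auto
  have "(\<Sum>j\<in>{1..m}. bt j (H' ?S) - \<epsilon>) \<le> (\<Sum>j\<in>{1..m}. bt j (H' S))"
    by (rule sum_mono) (use P in auto)
  then have "(\<Sum>j\<in>{1..m}. bt j (H' ?S)) - m * \<epsilon> \<le> (\<Sum>j\<in>{1..m}. bt j (H' S))"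
    by (simp add: sum_subtractf)
  moreover have "T + (\<Sum>j\<in>{1..m}. bt j (H' S)) \<le> S" using S(1) by (simp add: Up_def)
  ultimately have X: "T + (\<Sum>j\<in>{1..m}. bt j (H' ?S)) - m * \<epsilon> \<le> S" by linarith
  have Y: "S < ?S + \<gamma> / 2" by (rule P(2))
  have Z: "m * \<epsilon> < \<gamma> / 2" by (rule \<epsilon>(2))
  obtain c where c: "c = real m * \<epsilon>" by blast
  from X[folded c] Y Z[folded c] show False unfolding \<gamma>_def by argo
qed

lemma phi_top: "phi T \<le> T + m * Q" using phi_le[OF Up_top] .

lemma phi_gap: "phi T \<le> T + (\<Sum>j\<in>{1..m}. up j (H' (phi T)))"
proof (rule ccontr)
  assume nt: "\<not> ?thesis"
  let ?S = "phi T"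
  define \<gamma> where "\<gamma> = ?S - T - (\<Sum>j\<in>{1..m}. up j (H' ?S))"
  have \<gamma>: "\<gamma> > 0" using nt by (simp add: \<gamma>_def)
  define \<epsilon> where "\<epsilon> = \<gamma> / (2 * (m + 1))"
  have \<epsilon>: "\<epsilon> > 0" "m * \<epsilon> < \<gamma> / 2" using \<gamma> by (auto simp: \<epsilon>_def field_simps)
  have ev: "\<forall>j\<in>{1..m}. eventually (\<lambda>S. bt j (H' S) \<le> up j (H' ?S) + \<epsilon>) (at ?S)"
  proof
    fix j assume "j \<in> {1..m}"
    then have j: "j \<in> {1..n}" using mn by auto
    show "eventually (\<lambda>S. bt j (H' S) \<le> up j (H' ?S) + \<epsilon>) (at ?S)"
    proof (cases "up j (H' ?S) + \<epsilon> \<ge> Q")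
      case True
      show ?thesis
      proof (intro always_eventually allI)
        fix S show "bt j (H' S) \<le> up j (H' ?S) + \<epsilon>" using bt_range(2)[OF j, of "H' S"] True by linarith
      qed
    next
      case False
      define x where "x = up j (H' ?S) + \<epsilon>"
      have x: "x \<in> {0..Q}" "x > up j (H' ?S)" "x < Q" using False \<epsilon> up_range[OF j, of "H' ?S"] by (auto simp: x_def)
      then have "x \<notin> L j (H' ?S)" using le_up_iff[OF j x(1), of "H' ?S"] by auto
      then have "\<alpha> j * H' ?S < g' j x" using x by (auto simp: L_def)
      then have "H' ?S < g' j x / \<alpha> j" using alpha[OF j] by (simp add: field_simps)
      then have "eventually (\<lambda>S. H' S < g' j x / \<alpha> j) (at ?S)"
        by (rule order_tendstoD(2)[OF H'_isCont[of ?S, unfolded isCont_def]])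
      then show ?thesis
      proof eventually_elim
        case (elim S)
        then have "\<alpha> j * H' S < g' j x" using alpha[OF j] by (simp add: field_simps)
        then have "x \<in> R j (H' S)" using x by (auto simp: R_def)
        then have "bt j (H' S) \<le> x" using bt_le_iff[OF j x(1)] by auto
        then show ?case by (simp add: x_def)
      qed
    qed
  qed
  have ev1: "eventually (\<lambda>S. \<forall>j\<in>{1..m}. bt j (H' S) \<le> up j (H' ?S) + \<epsilon>) (at ?S)"
    using ev by (intro eventually_ball_finite) auto
  then obtain d where d: "d > 0"
    "\<And>S. S \<noteq> ?S \<Longrightarrow> dist S ?S < d \<Longrightarrow> (\<forall>j\<in>{1..m}. bt j (H' S) \<le> up j (H' ?S) + \<epsilon>)"
    unfolding eventually_at by auto
  define S where "S = ?S - min (d/2) (\<gamma>/4)"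
  have S: "S \<noteq> ?S" "dist S ?S < d" "S > ?S - \<gamma>/2" "S < ?S"
    using d \<gamma> by (auto simp: S_def dist_real_def)
  then have P: "\<forall>j\<in>{1..m}. bt j (H' S) \<le> up j (H' ?S) + \<epsilon>" using d by auto
  have "(\<Sum>j\<in>{1..m}. bt j (H' S)) \<le> (\<Sum>j\<in>{1..m}. up j (H' ?S) + \<epsilon>)"
    by (rule sum_mono) (use P in auto)
  then have "(\<Sum>j\<in>{1..m}. bt j (H' S)) \<le> (\<Sum>j\<in>{1..m}. up j (H' ?S)) + m * \<epsilon>"
    by (simp add: sum.distrib)
  moreover obtain c where c: "c = real m * \<epsilon>" by blast
  ultimately have "T + (\<Sum>j\<in>{1..m}. bt j (H' S)) \<le> S" using S \<epsilon>(2)[folded c] \<gamma>_def by argo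
  then have "S \<in> Up T" using S phi_top[of T] unfolding Up_def by auto
  then have "?S \<le> S" by (rule phi_le)
  with S show False by simp
qed

lemma phi_mono: assumes "T1 \<le> T2" shows "phi T1 \<le> phi T2"
proof -
  have "phi T1 \<le> S" if S: "S \<in> Up T2" for S
  proof (cases "S \<le> T1 + m * Q")
    case True
    then have "S \<in> Up T1" using S assms by (auto simp: Up_def)
    then show ?thesis by (rule phi_le)
  next
    case False
    then show ?thesis using phi_le[OF Up_top, of T1] by simp
  qed
  then show ?thesis unfolding phi_def[of T2] using Up_top by (intro cInf_greatest) auto
qed

lemma phi_lip: assumes "0 \<le> d" shows "phi (T + d) \<le> phi T + d"
proof -
  have "(\<Sum>j\<in>{1..m}. bt j (H' (phi T + d))) \<le> (\<Sum>j\<in>{1..m}. bt j (H' (phi T)))"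
    by (rule sum_mono, rule bt_mono) (use mn H'_antimono assms in auto)
  then have "phi T + d \<in> Up (T + d)" using phi_in[of T] by (auto simp: Up_def)
  then show ?thesis by (rule phi_le)
qed

lemma phi_dist: "\<bar>phi T1 - phi T2\<bar> \<le> \<bar>T1 - T2\<bar>"
proof (cases "T1 \<le> T2")
  case True
  have "phi (T1 + (T2 - T1)) \<le> phi T1 + (T2 - T1)" using True by (intro phi_lip) auto
  with phi_mono[OF True] show ?thesis by auto
next
  case False
  have "phi (T2 + (T1 - T2)) \<le> phi T2 + (T1 - T2)" using False by (intro phi_lip) auto
  with phi_mono[of T2 T1] False show ?thesis by auto
qed

lemma phi_cont: "continuous_on UNIV phi"
  unfolding continuous_on_iff
proof (intro ballI allI impI)
  fix x and e :: real assume "e > 0"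
  then show "\<exists>d>0. \<forall>x'\<in>UNIV. dist x' x < d \<longrightarrow> dist (phi x') (phi x) < e"
    using phi_dist by (intro exI[of _ e]) (auto simp: dist_real_def intro: le_less_trans)
qed

lemma NE_exists:
  "\<exists>y. (\<forall>j\<in>{1..m}. y j \<in> {0..Q} \<and> y j \<in> R j (H' (phi T)) \<and> y j \<in> L j (H' (phi T)))
       \<and> T + (\<Sum>j\<in>{1..m}. y j) = phi T"
proof -
  let ?p = "H' (phi T)"
  define A where "A = (\<Sum>j\<in>{1..m}. bt j ?p)"
  define B where "B = (\<Sum>j\<in>{1..m}. up j ?p)"
  define D where "D = phi T - T"
  have AD: "A \<le> D" using phi_in[of T] by (auto simp: Up_def A_def D_def)
  have DB: "D \<le> B" using phi_gap[of T] by (auto simp: B_def D_def)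
  define lam where "lam = (if B = A then 0 else (D - A) / (B - A))"
  have lam: "0 \<le> lam" "lam \<le> 1" "A + lam * (B - A) = D"
    using AD DB by (auto simp: lam_def field_simps)
  define y where "y j = bt j ?p + lam * (up j ?p - bt j ?p)" for j
  have "\<forall>j\<in>{1..m}. y j \<in> {0..Q} \<and> y j \<in> R j ?p \<and> y j \<in> L j ?p"
  proof
    fix j assume "j \<in> {1..m}"
    then have j: "j \<in> {1..n}" using mn by auto
    have bu: "bt j ?p \<le> up j ?p" by (rule bt_le_up[OF j])
    have 1: "bt j ?p \<le> y j" using lam bu by (simp add: y_def)
    have "lam * (up j ?p - bt j ?p) \<le> 1 * (up j ?p - bt j ?p)"
      by (rule mult_right_mono) (use lam bu in auto)
    then have 2: "y j \<le> up j ?p" by (simp add: y_def)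
    have yr: "y j \<in> {0..Q}" using 1 2 bt_range[OF j, of ?p] up_range[OF j, of ?p] by auto
    show "y j \<in> {0..Q} \<and> y j \<in> R j ?p \<and> y j \<in> L j ?p"
      using yr 1 2 bt_le_iff[OF j yr] le_up_iff[OF j yr] by auto
  qed
  moreover have "(\<Sum>j\<in>{1..m}. y j) = A + lam * (B - A)"
    by (simp add: y_def A_def B_def sum.distrib sum_distrib_left sum_subtractf algebra_simps)
  ultimately show ?thesis using lam by (intro exI[of _ y]) (auto simp: D_def)
qed

end

locale game = reg +
  fixes h :: "nat \<Rightarrow> real \<Rightarrow> real" and k :: nat
  assumes hid: "\<And>i t. i \<in> {1..n} \<Longrightarrow> t \<in> {0..Q} \<Longrightarrow> h i t = t"
    and mdef: "m = n - k" and kn: "k \<le> n"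
begin

abbreviation "P \<equiv> spg_profiles n Q"
abbreviation "Cs \<equiv> {m+1..n}"
definition Tc where "Tc z = (\<Sum>i\<in>Cs. z i)"
definition Fv where "Fv x = (\<Sum>i\<in>Cs. \<alpha> i * H (phi (Tc x)) - g i (x i))"

lemma coop_eq: "cooperators n k = Cs" using kn by (auto simp: cooperators_def mdef)
lemma noncoop_eq: "noncooperators n k = {1..m}" by (simp add: noncooperators_def mdef)

lemma inP: "z \<in> P \<Longrightarrow> i \<in> {1..n} \<Longrightarrow> z i \<in> {0..Q}"
  by (auto simp: spg_profiles_def)

lemma agg_h: assumes "z \<in> P" shows "(\<Sum>j\<in>{1..n}. h j (z j)) = (\<Sum>j\<in>{1..n}. z j)"
proof (rule sum.cong[OF refl])
  fix j assume j: "j \<in> {1..n}"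
  show "h j (z j) = z j" by (rule hid[OF j inP[OF assms j]])
qed

lemma sum_upd:
  fixes z :: "nat \<Rightarrow> real"
  assumes "j \<in> A" "finite A"
  shows "(\<Sum>i\<in>A. (z(j := t)) i) = (\<Sum>i\<in>A. z i) - z j + t"
proof -
  have 1: "(\<Sum>i\<in>A. (z(j := t)) i) = (z(j := t)) j + (\<Sum>i\<in>A - {j}. (z(j := t)) i)"
    by (rule sum.remove[OF assms(2,1)])
  have 2: "(\<Sum>i\<in>A - {j}. (z(j := t)) i) = (\<Sum>i\<in>A - {j}. z i)" by (rule sum.cong) auto
  have 3: "(\<Sum>i\<in>A. z i) = z j + (\<Sum>i\<in>A - {j}. z i)" by (rule sum.remove[OF assms(2,1)])
  have 4: "(z(j := t)) j = t" by simp
  show ?thesis unfolding 1 2 3 4 by (simp add: algebra_simps)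
qed

lemma payoff_eq: "z \<in> P \<Longrightarrow> spg_payoff n H \<alpha> h g i z = \<alpha> i * H (\<Sum>j\<in>{1..n}. z j) - g i (z i)"
  unfolding spg_payoff_def agg_h[of z] by simp

lemma payoff_upd:
  assumes "z \<in> P" "j \<in> {1..n}" "t \<in> {0..Q}"
  shows "spg_payoff n H \<alpha> h g j (z(j := t)) = \<alpha> j * H ((\<Sum>i\<in>{1..n}. z i) - z j + t) - g j t"
proof -
  have zu: "z(j := t) \<in> P" using assms by (auto simp: spg_profiles_def)
  show ?thesis unfolding payoff_eq[OF zu] sum_upd[OF assms(2) finite_atLeastAtMost] by simp
qed

lemma split_sum: "(\<Sum>i\<in>{1..n}. z i) = Tc z + (\<Sum>i\<in>{1..m}. z i)"
proof -
  have "{1..n} = {1..m} \<union> Cs" using mn by auto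
  then have "(\<Sum>i\<in>{1..n}. z i) = (\<Sum>i\<in>{1..m} \<union> Cs. z i)" by simp
  also have "\<dots> = (\<Sum>i\<in>{1..m}. z i) + (\<Sum>i\<in>Cs. z i)" by (rule sum.union_disjoint) auto
  finally show ?thesis by (simp add: Tc_def add.commute)
qed

lemma NE_R:
  assumes "noncoop_NE n Q H \<alpha> h g k z" "j \<in> {1..m}"
  shows "z j \<in> R j (H' (\<Sum>i\<in>{1..n}. z i))"
proof -
  have zP: "z \<in> P" and ne: "\<forall>j\<in>{1..m}. \<forall>t\<in>{0..Q}. spg_payoff n H \<alpha> h g j (z(j := t)) \<le> spg_payoff n H \<alpha> h g j z"
    using assms(1) by (auto simp: noncoop_NE_def noncoop_eq)
  have j: "j \<in> {1..n}" using assms(2) mn by auto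
  show ?thesis
  proof (rule foc_nec[OF j inP[OF zP j]], intro ballI)
    fix t assume t: "t \<in> {0..Q}"
    have "spg_payoff n H \<alpha> h g j (z(j := t)) \<le> spg_payoff n H \<alpha> h g j z"
      using ne assms(2) t by blast
    then show "\<alpha> j * H ((\<Sum>i\<in>{1..n}. z i) - z j + t) - g j t \<le> \<alpha> j * H (\<Sum>i\<in>{1..n}. z i) - g j (z j)"
      unfolding payoff_upd[OF zP j t] payoff_eq[OF zP] .
  qed
qed

lemma NE_phi:
  assumes "noncoop_NE n Q H \<alpha> h g k z"
  shows "phi (Tc z) \<le> (\<Sum>i\<in>{1..n}. z i)"
proof (rule phi_le)
  let ?S = "\<Sum>i\<in>{1..n}. z i"
  have zP: "z \<in> P" using assms by (simp add: noncoop_NE_def)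
  have "(\<Sum>j\<in>{1..m}. bt j (H' ?S)) \<le> (\<Sum>j\<in>{1..m}. z j)"
  proof (rule sum_mono)
    fix j assume j: "j \<in> {1..m}"
    then have jn: "j \<in> {1..n}" using mn by auto
    show "bt j (H' ?S) \<le> z j" using bt_le_iff[OF jn inP[OF zP jn]] NE_R[OF assms j] by simp
  qed
  moreover have "(\<Sum>j\<in>{1..m}. z j) \<le> (\<Sum>j\<in>{1..m}. Q)"
    by (rule sum_mono) (use inP[OF zP] mn in auto)
  moreover have "(\<Sum>j\<in>{1..m}. Q) = m * Q" by simp
  moreover have "?S = Tc z + (\<Sum>j\<in>{1..m}. z j)" by (rule split_sum)
  ultimately show "?S \<in> Up (Tc z)" unfolding Up_def mem_Collect_eq by linarith
qed

lemma NE_suff: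
  assumes zP: "z \<in> P"
    and foc: "\<forall>j\<in>{1..m}. z j \<in> R j (H' (\<Sum>i\<in>{1..n}. z i)) \<and> z j \<in> L j (H' (\<Sum>i\<in>{1..n}. z i))"
  shows "noncoop_NE n Q H \<alpha> h g k z"
  unfolding noncoop_NE_def noncoop_eq
proof (intro conjI zP ballI)
  fix j t assume j: "j \<in> {1..m}" and t: "t \<in> {0..Q}"
  have jn: "j \<in> {1..n}" using j mn by auto
  show "spg_payoff n H \<alpha> h g j (z(j := t)) \<le> spg_payoff n H \<alpha> h g j z"
    using foc_suff[OF jn inP[OF zP jn] _ _ t, of "\<Sum>i\<in>{1..n}. z i"] foc j
    by (simp add: payoff_upd[OF zP jn t] payoff_eq[OF zP])
qed

lemma NE_construct:
  assumes xP: "x \<in> P"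
  shows "\<exists>z. z \<in> NE_given n Q H \<alpha> h g k x \<and> (\<Sum>i\<in>{1..n}. z i) = phi (Tc x)"
proof -
  obtain y where y: "\<forall>j\<in>{1..m}. y j \<in> {0..Q} \<and> y j \<in> R j (H' (phi (Tc x))) \<and> y j \<in> L j (H' (phi (Tc x)))"
    "Tc x + (\<Sum>j\<in>{1..m}. y j) = phi (Tc x)"
    using NE_exists by blast
  define z where "z i = (if i \<in> {1..m} then y i else x i)" for i
  have TC: "Tc z = Tc x" unfolding Tc_def by (rule sum.cong) (auto simp: z_def)
  have "(\<Sum>i\<in>{1..m}. z i) = (\<Sum>i\<in>{1..m}. y i)" by (rule sum.cong) (auto simp: z_def)
  then have S: "(\<Sum>i\<in>{1..n}. z i) = phi (Tc x)"
    using y(2) split_sum[of z] TC by simp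
  have zP: "z \<in> P" using xP y(1) by (auto simp: spg_profiles_def z_def)
  have "noncoop_NE n Q H \<alpha> h g k z"
    by (rule NE_suff[OF zP]) (use y(1) S in \<open>auto simp: z_def\<close>)
  moreover have "\<forall>i\<in>cooperators n k. z i = x i" by (auto simp: coop_eq z_def)
  ultimately show ?thesis using S by (auto simp: NE_given_def)
qed

lemma coop_sum_eq: "z \<in> P \<Longrightarrow> coop_sum n H \<alpha> h g k z = (\<Sum>i\<in>Cs. \<alpha> i * H (\<Sum>j\<in>{1..n}. z j) - g i (z i))"
  unfolding coop_sum_def coop_eq by (rule sum.cong) (auto simp: payoff_eq)

lemma NE_given_Tc: "z \<in> NE_given n Q H \<alpha> h g k x \<Longrightarrow> Tc z = Tc x"
  unfolding Tc_def NE_given_def coop_eq by (auto intro: sum.cong)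

lemma tilde_min:
  assumes xP: "x \<in> P"
  shows "\<exists>z\<in>NE_given n Q H \<alpha> h g k x. (\<forall>w\<in>NE_given n Q H \<alpha> h g k x.
            coop_sum n H \<alpha> h g k z \<le> coop_sum n H \<alpha> h g k w) \<and> coop_sum n H \<alpha> h g k z = Fv x"
proof -
  obtain z where z: "z \<in> NE_given n Q H \<alpha> h g k x" "(\<Sum>i\<in>{1..n}. z i) = phi (Tc x)"
    using NE_construct[OF xP] by blast
  have zP: "z \<in> P" using z(1) by (auto simp: NE_given_def noncoop_NE_def)
  have zx: "\<And>i. i \<in> Cs \<Longrightarrow> z i = x i" using z(1) by (auto simp: NE_given_def coop_eq)
  have cz: "coop_sum n H \<alpha> h g k z = Fv x"
    unfolding coop_sum_eq[OF zP] Fv_def z(2) by (rule sum.cong) (auto simp: zx)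
  have "coop_sum n H \<alpha> h g k z \<le> coop_sum n H \<alpha> h g k w" if w: "w \<in> NE_given n Q H \<alpha> h g k x" for w
  proof -
    have wP: "w \<in> P" using w by (auto simp: NE_given_def noncoop_NE_def)
    have wx: "\<And>i. i \<in> Cs \<Longrightarrow> w i = x i" using w by (auto simp: NE_given_def coop_eq)
    have "phi (Tc w) \<le> (\<Sum>i\<in>{1..n}. w i)" using w by (intro NE_phi) (auto simp: NE_given_def)
    then have le: "phi (Tc x) \<le> (\<Sum>i\<in>{1..n}. w i)" using NE_given_Tc[OF w] by simp
    show ?thesis unfolding coop_sum_eq[OF zP] coop_sum_eq[OF wP] z(2)
    proof (rule sum_mono)
      fix i assume i: "i \<in> Cs"
      have "\<alpha> i * H (phi (Tc x)) \<le> \<alpha> i * H (\<Sum>j\<in>{1..n}. w j)"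
        using alpha[of i] i Hmono le mn by (intro mult_left_mono) (auto simp: mono_def)
      then show "\<alpha> i * H (phi (Tc x)) - g i (z i) \<le> \<alpha> i * H (\<Sum>j\<in>{1..n}. w j) - g i (w i)"
        using zx[OF i] wx[OF i] by simp
    qed
  qed
  with z cz show ?thesis by blast
qed

lemma tilde_eq: "x \<in> P \<Longrightarrow> tilde_pi n Q H \<alpha> h g k x = Fv x"
proof -
  assume xP: "x \<in> P"
  obtain z where z: "z \<in> NE_given n Q H \<alpha> h g k x" "\<forall>w\<in>NE_given n Q H \<alpha> h g k x.
            coop_sum n H \<alpha> h g k z \<le> coop_sum n H \<alpha> h g k w" "coop_sum n H \<alpha> h g k z = Fv x"
    using tilde_min[OF xP] by blast
  have "Inf (coop_sum n H \<alpha> h g k ` NE_given n Q H \<alpha> h g k x) = coop_sum n H \<alpha> h g k z"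
  proof (rule cInf_eq_minimum)
    show "coop_sum n H \<alpha> h g k z \<in> coop_sum n H \<alpha> h g k ` NE_given n Q H \<alpha> h g k x"
      using z(1) by (rule imageI)
  next
    fix v assume "v \<in> coop_sum n H \<alpha> h g k ` NE_given n Q H \<alpha> h g k x"
    then show "coop_sum n H \<alpha> h g k z \<le> v" using z(2) by auto
  qed
  then show ?thesis unfolding tilde_pi_def z(3) .
qed


definition Kf where "Kf i = (if i \<in> Cs then {0..Q} else {0::real})"
definition K where "K = {x. \<forall>i. x i \<in> Kf i}"

lemma Tc_cong: "(\<And>i. i \<in> Cs \<Longrightarrow> x i = y i) \<Longrightarrow> Tc x = Tc y"
  unfolding Tc_def by (rule sum.cong) auto

lemma Fv_cong: "(\<And>i. i \<in> Cs \<Longrightarrow> x i = y i) \<Longrightarrow> Fv x = Fv y"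
  unfolding Fv_def using Tc_cong[of x y] by (intro sum.cong) auto

lemma K_compact: "compact K"
proof -
  have "compactin (product_topology (\<lambda>i. euclidean) UNIV) (PiE UNIV Kf)"
    by (subst compactin_PiE) (auto simp: Kf_def)
  then have "compactin euclidean (PiE UNIV Kf)" by (simp add: euclidean_product_topology)
  moreover have "PiE UNIV Kf = K" by (auto simp: K_def PiE_def Pi_def extensional_def)
  ultimately show ?thesis by simp
qed

lemma coord_cont: "continuous_on K (\<lambda>x. x i)"
  by (rule continuous_on_subset[OF continuous_on_product_coordinates]) simp

lemma Fv_cont: "continuous_on K Fv"
proof -
  have Hc: "continuous_on UNIV H"
    by (rule continuous_at_imp_continuous_on) (use Hder DERIV_isCont in blast)
  have Tcc: "continuous_on K Tc" unfolding Tc_def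
    by (intro continuous_on_sum coord_cont)
  have HP: "continuous_on K (\<lambda>x. H (phi (Tc x)))"
    by (rule continuous_on_compose2[OF Hc continuous_on_compose2[OF phi_cont Tcc]]) auto
  have gc: "continuous_on K (\<lambda>x. g i (x i))" if i: "i \<in> Cs" for i
  proof -
    have in1: "i \<in> {1..n}" using i by auto
    have "continuous_on {0..Q} (g i)" by (rule DERIV_continuous_on) (rule gder[OF in1])
    then show ?thesis
      by (rule continuous_on_compose2[OF _ coord_cont]) (use i in \<open>auto simp: K_def Kf_def\<close>)
  qed
  show ?thesis unfolding Fv_def
    by (intro continuous_on_sum continuous_on_diff continuous_on_mult continuous_on_const HP gc)
qed

lemma K_ne: "(\<lambda>_. 0) \<in> K" using Qpos by (auto simp: K_def Kf_def)

lemma K_P: "x \<in> K \<Longrightarrow> x \<in> P"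
  using Qpos by (fastforce simp: K_def Kf_def spg_profiles_def split: if_splits)

theorem PCLE_exists: "\<exists>x. is_PCLE n Q H \<alpha> h g k x"
proof -
  obtain x where x: "x \<in> K" "\<forall>y\<in>K. Fv y \<le> Fv x"
    using continuous_attains_sup[OF K_compact _ Fv_cont] K_ne by blast
  have xP: "x \<in> P" by (rule K_P[OF x(1)])
  obtain z where z: "z \<in> NE_given n Q H \<alpha> h g k x" "\<forall>w\<in>NE_given n Q H \<alpha> h g k x.
            coop_sum n H \<alpha> h g k z \<le> coop_sum n H \<alpha> h g k w" "coop_sum n H \<alpha> h g k z = Fv x"
    using tilde_min[OF xP] by blast
  have zNE: "noncoop_NE n Q H \<alpha> h g k z" using z(1) by (simp add: NE_given_def)
  have zP: "z \<in> P" using zNE by (simp add: noncoop_NE_def)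
  have zx: "\<And>i. i \<in> Cs \<Longrightarrow> z i = x i" using z(1) by (auto simp: NE_given_def coop_eq)
  have NEeq: "NE_given n Q H \<alpha> h g k z = NE_given n Q H \<alpha> h g k x"
    using zx by (auto simp: NE_given_def coop_eq)
  have tz: "tilde_pi n Q H \<alpha> h g k z = Fv x"
    using tilde_eq[OF zP] Fv_cong[of z x] zx by simp
  show ?thesis
  proof (intro exI[of _ z], unfold is_PCLE_def, intro conjI ballI)
    show "z \<in> P" by (rule zP)
  next
    fix y assume yP: "y \<in> P"
    define y' where "y' i = (if i \<in> Cs then y i else 0)" for i
    have "y' \<in> K" using yP by (auto simp: y'_def K_def Kf_def spg_profiles_def)
    then have "Fv y' \<le> Fv x" using x(2) by blast
    moreover have "Fv y = Fv y'" by (rule Fv_cong) (simp add: y'_def)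
    ultimately show "tilde_pi n Q H \<alpha> h g k y \<le> tilde_pi n Q H \<alpha> h g k z"
      using tilde_eq[OF yP] tz by simp
  next
    show "z \<in> NE_given n Q H \<alpha> h g k z" using zNE by (simp add: NE_given_def)
  next
    fix w assume "w \<in> NE_given n Q H \<alpha> h g k z"
    then show "coop_sum n H \<alpha> h g k z \<le> coop_sum n H \<alpha> h g k w" using z(2) NEeq by auto
  qed
qed

end

theorem proposition6:
  fixes n :: nat and Q :: real and H :: "real \<Rightarrow> real" and \<alpha> :: "nat \<Rightarrow> real"
    and h g :: "nat \<Rightarrow> real \<Rightarrow> real" and k :: nat
  assumes "regular_spg n Q H \<alpha> h g"
    and "k \<in> {2..n}"
  shows "\<exists>x. is_PCLE n Q H \<alpha> h g k x"
proof -
  from assms(1) have sg: "social_purpose_game n Q \<alpha>"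
    and hid: "\<forall>i\<in>{1..n}. \<forall>t\<in>{0..Q}. h i t = t"
    and Hd: "\<exists>H'. continuous_on UNIV H' \<and> (\<forall>t. (H has_real_derivative H' t) (at t))"
    and Hm: "mono H" and Hc: "concave_on UNIV H"
    and gi: "\<forall>i\<in>{1..n}. continuously_differentiable_on_interval 0 Q (g i)
                     \<and> mono_on {0..Q} (g i) \<and> convex_on {0..Q} (g i)"
    unfolding regular_spg_def by auto
  obtain H' where H': "continuous_on UNIV H'" "\<And>t. (H has_real_derivative H' t) (at t)"
    using Hd by blast
  have "\<forall>i\<in>{1..n}. \<exists>f'. continuous_on {0..Q} f' \<and> (\<forall>t\<in>{0..Q}. (g i has_real_derivative f' t) (at t within {0..Q}))"
    using gi by (auto simp: continuously_differentiable_on_interval_def)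
  then obtain g' where g': "\<forall>i\<in>{1..n}. continuous_on {0..Q} (g' i) \<and> (\<forall>t\<in>{0..Q}. (g i has_real_derivative g' i t) (at t within {0..Q}))"
    by (metis bchoice)
  interpret game n Q H \<alpha> g "n - k" H' g' h k
  proof
    show "Q > 0" using sg by (simp add: social_purpose_game_def)
    show "n - k \<le> n" by simp
    show "\<And>i. i \<in> {1..n} \<Longrightarrow> \<alpha> i > 0" using sg by (simp add: social_purpose_game_def)
  qed (use H' Hm Hc g' gi hid assms(2) in auto)
  show ?thesis by (rule PCLE_exists)
qed

end
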